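(* Let $F:\mathbb{R}^N\times\mathbb{R}\times\mathbb{R}^N\times S^N\to\mathbb{R}$ be continuous and uniformly elliptic: there are $0<\lambda\le\Lambda$ with $\lambda\,\mathrm{tr}(Q)\le F(x,t,p,X)-F(x,t,p,X+Q)\le\Lambda\,\mathrm{tr}(Q)$ for all $x,p,t,X$ and all $Q\in S^N$, $Q\ge0$. Assume $F(x,t,p,0)\le-\bar b(x)\cdot p+g(x)|p|+\bar c(x)t$ for all $x,t,p$, where $\bar b:\mathbb{R}^N\to\mathbb{R}^N$ and $g:\mathbb{R}^N\to\mathbb{R}$ are locally Lipschitz, $\bar c:\mathbb{R}^N\to\mathbb{R}$ is continuous, $g\ge0$, $\bar c\ge0$, and for some $R_o>0$ $$\bar b(x)\cdot x+g(x)|x|\le\bar c(x)|x|^2\log|x|+\lambda-(N-1)\Lambda\quad\text{for }|x|\ge R_o.$$ Let $v\in LSC(\mathbb{R}^N)$ be a viscosity supersolution of $F(x,v,Dv,D^2v)=0$ in $\mathbb{R}^N$ with $\liminf_{|x|\to\infty}v(x)/\log|x|\ge0$. If either $\bar c\equiv0$ or $v\le0$, then $v$ is constant.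
   Context: $S^N$ is the space of real symmetric $N\times N$ matrices. *)

theory Defs
  imports "HOL-Analysis.Analysis"
begin

definition symmetric_mat :: "real^'n^'n \<Rightarrow> bool" where
  "symmetric_mat X \<longleftrightarrow> transpose X = X"

definition psd_mat :: "real^'n^'n \<Rightarrow> bool" where
  "psd_mat Q \<longleftrightarrow> (\<forall>\<xi>. 0 \<le> \<xi> \<bullet> (Q *v \<xi>))"

definition lsc :: "('a::topological_space \<Rightarrow> real) \<Rightarrow> bool" where
  "lsc v \<longleftrightarrow> (\<forall>x a. a < v x \<longrightarrow> eventually (\<lambda>y. a < v y) (at x))"

definition locally_lipschitz :: "('a::metric_space \<Rightarrow> 'b::metric_space) \<Rightarrow> bool" where
  "locally_lipschitz f \<longleftrightarrow> (\<forall>x. \<exists>r>0. \<exists>L. L-lipschitz_on (ball x r) f)"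

definition C2_with :: "(real^'n \<Rightarrow> real) \<Rightarrow> (real^'n \<Rightarrow> real^'n) \<Rightarrow> (real^'n \<Rightarrow> real^'n^'n) \<Rightarrow> bool" where
  "C2_with \<phi> D\<phi> H \<longleftrightarrow>
     (\<forall>x. (\<phi> has_derivative (\<lambda>h. D\<phi> x \<bullet> h)) (at x)) \<and>
     (\<forall>x. (D\<phi> has_derivative (\<lambda>h. H x *v h)) (at x)) \<and>
     continuous_on UNIV H"

(* viscosity supersolution of F(x,v,Dv,D^2v) = 0 in R^N (Crandall-Ishii-Lions convention) *)
definition viscosity_supersolution ::
  "(real^'n \<Rightarrow> real \<Rightarrow> real^'n \<Rightarrow> real^'n^'n \<Rightarrow> real) \<Rightarrow> (real^'n \<Rightarrow> real) \<Rightarrow> bool" where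
  "viscosity_supersolution F v \<longleftrightarrow> lsc v \<and>
     (\<forall>\<phi> D\<phi> H x0. C2_with \<phi> D\<phi> H \<longrightarrow>
        (\<exists>r>0. \<forall>y\<in>ball x0 r. v x0 - \<phi> x0 \<le> v y - \<phi> y) \<longrightarrow>
        F x0 (v x0) (D\<phi> x0) (H x0) \<ge> 0)"

end

theory Submission
  imports Defs
begin

definition opm :: "real^'n \<Rightarrow> real^'n^'n" where
  "opm y = (\<chi> i j. y$i * y$j)"

lemma opm_mult: "opm y *v h = (y \<bullet> h) *\<^sub>R y"
  by (simp add: opm_def matrix_vector_mult_def inner_vec_def vec_eq_iff sum_distrib_left mult.assoc mult.commute mult.left_commute)

lemma opm_sym: "symmetric_mat (opm y)"
  by (simp add: symmetric_mat_def opm_def transpose_def vec_eq_iff mult.commute)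

lemma opm_psd: "psd_mat (opm y)"
  by (simp add: psd_mat_def opm_mult inner_commute)

lemma opm_trace: "trace (opm y) = norm y ^ 2"
  by (simp add: trace_def opm_def power2_norm_eq_inner inner_vec_def)

lemma mat1_sym: "symmetric_mat (mat 1 :: real^'n^'n)"
  by (simp add: symmetric_mat_def transpose_mat)

lemma sym_add: "symmetric_mat A \<Longrightarrow> symmetric_mat B \<Longrightarrow> symmetric_mat (A + B)"
  by (simp add: symmetric_mat_def transpose_def vec_eq_iff)

lemma sym_diff: "symmetric_mat A \<Longrightarrow> symmetric_mat B \<Longrightarrow> symmetric_mat (A - B)"
  by (simp add: symmetric_mat_def transpose_def vec_eq_iff)

lemma sym_scale: "symmetric_mat A \<Longrightarrow> symmetric_mat (c *\<^sub>R A)"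
  by (simp add: symmetric_mat_def transpose_def vec_eq_iff)

lemma sym_zero: "symmetric_mat (0::real^'n^'n)"
  by (simp add: symmetric_mat_def transpose_def vec_eq_iff)

lemma scale_mv: "(c *\<^sub>R A) *v h = c *\<^sub>R (A *v h)" for A :: "real^'n^'n"
  by (simp add: matrix_vector_mult_def vec_eq_iff sum_distrib_left mult.assoc)

lemma trace_scale: "trace (c *\<^sub>R A) = c * trace A" for A :: "real^'n^'n"
  by (simp add: trace_def sum_distrib_left)

lemma psd_scale: "psd_mat A \<Longrightarrow> 0 \<le> c \<Longrightarrow> psd_mat (c *\<^sub>R A)"
  by (simp add: psd_mat_def scale_mv)

lemma psd_proj: assumes "y \<noteq> 0"
  shows "psd_mat (mat 1 - (1 / (norm y)^2) *\<^sub>R opm y)"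
proof -
  have "0 \<le> \<xi> \<bullet> ((mat 1 - (1 / (norm y)^2) *\<^sub>R opm y) *v \<xi>)" for \<xi>
  proof -
    have e: "(mat 1 - (1 / (norm y)^2) *\<^sub>R opm y) *v \<xi> = \<xi> - ((1 / (norm y)^2) * (y \<bullet> \<xi>)) *\<^sub>R y"
      by (simp add: matrix_vector_mult_diff_rdistrib scale_mv opm_mult)
    have cs: "(y \<bullet> \<xi>)^2 \<le> (norm y)^2 * (norm \<xi>)^2"
      by (metis Cauchy_Schwarz_ineq2 abs_le_square_iff norm_mult power_mult_distrib abs_norm_cancel real_norm_def)
    have "\<xi> \<bullet> (\<xi> - ((1 / (norm y)^2) * (y \<bullet> \<xi>)) *\<^sub>R y) = (norm \<xi>)^2 - (y \<bullet> \<xi>)^2 / (norm y)^2"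
      by (simp add: inner_diff_right power2_norm_eq_inner inner_commute power2_eq_square flip: power2_norm_eq_inner)
    moreover have "(y \<bullet> \<xi>)^2 / (norm y)^2 \<le> (norm \<xi>)^2"
      using cs assms by (simp add: divide_le_eq mult.commute)
    ultimately show ?thesis using e by simp
  qed
  then show ?thesis by (simp add: psd_mat_def)
qed

lemma sqn_deriv: "((\<lambda>x. (norm (x - z))^2) has_derivative (\<lambda>h. 2 * ((x - z) \<bullet> h))) (at x)"
  for z x :: "real^'n"
proof -
  have "((\<lambda>x. (x - z) \<bullet> (x - z)) has_derivative (\<lambda>h. (x - z) \<bullet> (h - 0) + (h - 0) \<bullet> (x - z))) (at x)"
    by (intro has_derivative_inner has_derivative_diff has_derivative_ident has_derivative_const)
  moreover have "(\<lambda>h. (x - z) \<bullet> (h - 0) + (h - 0) \<bullet> (x - z)) = (\<lambda>h. 2 * ((x - z) \<bullet> h))"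
    by (rule ext) (metis inner_commute mult_2 diff_zero)
  moreover have "(\<lambda>x. (x - z) \<bullet> (x - z)) = (\<lambda>x. (norm (x - z))^2)"
    by (rule ext) (simp only: power2_norm_eq_inner)
  ultimately show ?thesis by simp
qed

lemma opm_cont: "continuous_on UNIV (\<lambda>x::real^'n. opm (x - z))"
  unfolding opm_def by (intro continuous_on_vec_lambda continuous_on_mult continuous_on_component continuous_on_diff continuous_on_id continuous_on_const)

lemma radial_C2:
  fixes G G1 G2 :: "real \<Rightarrow> real" and z :: "real^'n"
  assumes d1: "\<And>s. s \<ge> 0 \<Longrightarrow> (G has_real_derivative G1 s) (at s)"
    and d2: "\<And>s. s \<ge> 0 \<Longrightarrow> (G1 has_real_derivative G2 s) (at s)"
    and c2: "\<And>s. s \<ge> 0 \<Longrightarrow> isCont G2 s"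
  shows "C2_with (\<lambda>x. G ((norm (x - z))^2)) (\<lambda>x. (2 * G1 ((norm (x - z))^2)) *\<^sub>R (x - z))
     (\<lambda>x. (2 * G1 ((norm (x - z))^2)) *\<^sub>R mat 1 + (4 * G2 ((norm (x - z))^2)) *\<^sub>R opm (x - z))"
  unfolding C2_with_def
proof (intro conjI allI)
  fix x :: "real^'n"
  let ?s = "(norm (x - z))^2"
  have s0: "?s \<ge> 0" by simp
  have dxz: "((\<lambda>x. x - z) has_derivative (\<lambda>h. h)) (at x)"
    using has_derivative_diff[OF has_derivative_ident has_derivative_const] by simp
  have "((\<lambda>x. G ((norm (x - z))^2)) has_derivative (\<lambda>h. G1 ?s * (2 * ((x - z) \<bullet> h)))) (at x)"
    using has_derivative_compose[OF sqn_deriv has_field_derivative_imp_has_derivative[OF d1[OF s0]]]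
    by simp
  then show "((\<lambda>x. G ((norm (x - z))^2)) has_derivative (\<lambda>h. (2 * G1 ?s) *\<^sub>R (x - z) \<bullet> h)) (at x)"
    by (simp add: algebra_simps)
  have g1: "((\<lambda>x. G1 ((norm (x - z))^2)) has_derivative (\<lambda>h. G2 ?s * (2 * ((x - z) \<bullet> h)))) (at x)"
    using has_derivative_compose[OF sqn_deriv has_field_derivative_imp_has_derivative[OF d2[OF s0]]]
    by simp
  have "((\<lambda>x. (2 * G1 ((norm (x - z))^2)) *\<^sub>R (x - z)) has_derivative
        (\<lambda>h. (2 * G1 ?s) *\<^sub>R h + (2 * (G2 ?s * (2 * ((x - z) \<bullet> h)))) *\<^sub>R (x - z))) (at x)"
    using dxz by (intro has_derivative_scaleR has_derivative_mult_right g1)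
  moreover have "(\<lambda>h. (2 * G1 ?s) *\<^sub>R h + (2 * (G2 ?s * (2 * ((x - z) \<bullet> h)))) *\<^sub>R (x - z))
     = (\<lambda>h. ((2 * G1 ?s) *\<^sub>R mat 1 + (4 * G2 ?s) *\<^sub>R opm (x - z)) *v h)"
    by (rule ext) (simp add: matrix_vector_mult_add_rdistrib scale_mv opm_mult matrix_vector_mul_lid)
  ultimately show "((\<lambda>x. (2 * G1 ((norm (x - z))^2)) *\<^sub>R (x - z)) has_derivative
        (\<lambda>h. ((2 * G1 ?s) *\<^sub>R mat 1 + (4 * G2 ?s) *\<^sub>R opm (x - z)) *v h)) (at x)"
    by simp
next
  have cG1: "continuous_on UNIV (\<lambda>x::real^'n. G1 ((norm (x - z))^2))"
  proof (rule continuous_at_imp_continuous_on, intro ballI)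
    fix x :: "real^'n"
    have "isCont G1 ((norm (x - z))^2)" using d2[of "(norm (x - z))^2"] DERIV_isCont by simp
    then show "isCont (\<lambda>x. G1 ((norm (x - z))^2)) x"
      by (rule isCont_o2[rotated]) (intro continuous_power continuous_norm continuous_diff continuous_ident continuous_const)
  qed
  have cG2: "continuous_on UNIV (\<lambda>x::real^'n. G2 ((norm (x - z))^2))"
  proof (rule continuous_at_imp_continuous_on, intro ballI)
    fix x :: "real^'n"
    have "isCont G2 ((norm (x - z))^2)" using c2[of "(norm (x - z))^2"] by simp
    then show "isCont (\<lambda>x. G2 ((norm (x - z))^2)) x"
      by (rule isCont_o2[rotated]) (intro continuous_power continuous_norm continuous_diff continuous_ident continuous_const)
  qed
  show "continuous_on UNIV (\<lambda>x. (2 * G1 ((norm (x - z))^2)) *\<^sub>R mat 1 + (4 * G2 ((norm (x - z))^2)) *\<^sub>R opm (x - z))"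
    by (intro continuous_on_add continuous_on_scaleR continuous_on_mult continuous_on_const cG1 cG2 opm_cont)
qed


lemma W_aux: fixes a l r s D n L T :: real
  shows "a*l*r \<le> 4*a*l * s \<Longrightarrow> 2*D + 2*l + 2*(n-1)*L + 1 \<le> a*l*r \<Longrightarrow> T \<le> D \<Longrightarrow> 2*T + 2*l - 4*a*l * s + 2*(n-1)*L < 0"
  by linarith

lemma L_aux: fixes E1 E2 B c0 s0 l0 lam n L v0 :: real
  assumes "0 \<le> -2 * E1 * B + c0 * v0 - lam * (2 * E1 + 4 * E2 * s0) - 2 * (n - 1) * L * E1"
    "-2 * E1 * B \<le> -2 * E1 * (c0 * s0 * l0 + lam - (n - 1) * L)"
    "0 < lam * (4 * E1 + 4 * E2 * s0)" "c0 * (v0 - 2 * E1 * s0 * l0) \<le> 0"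
  shows False
proof -
  have "-2 * E1 * (c0 * s0 * l0 + lam - (n - 1) * L) + c0 * v0 - lam * (2 * E1 + 4 * E2 * s0) - 2 * (n - 1) * L * E1
     = c0 * (v0 - 2 * E1 * s0 * l0) - lam * (4 * E1 + 4 * E2 * s0)" by (simp add: algebra_simps)
  then show False using assms by linarith
qed

lemma neg_aux: fixes u w Y B :: real
  shows "B \<le> Y \<Longrightarrow> u * w = Y / 2 \<Longrightarrow> - u * w + B / 2 \<le> 0"
  by (simp add: field_simps)

lemma E1: fixes a s0 q \<beta> :: real assumes "q \<noteq> 0"
  shows "2 * (- (a/2) * inverse q + \<beta> / 2) + 4 * ((a/2) * inverse (q^2)) * s0 = \<beta> + a * (2 * s0 - q) / q^2"
  using assms by (simp add: field_simps power2_eq_square)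
lemma E2: fixes a s0 q \<beta> :: real assumes "q \<noteq> 0"
  shows "4 * (- (a/2) * inverse q + \<beta> / 2) + 4 * ((a/2) * inverse (q^2)) * s0 = 2 * \<beta> - 2 * a * (q - s0) / q^2"
  using assms by (simp add: field_simps power2_eq_square)
lemma E3: fixes a s0 q \<beta> l M :: real assumes "q \<noteq> 0"
  shows "(M - (a/2) * ln q + \<beta> * s0 / 2) - 2 * (- (a/2) * inverse q + \<beta> / 2) * s0 * l = M - (a/2) * ln q + (a * s0 / q) * l
           + \<beta> * s0 * (1/2 - l)"
  using assms by (simp add: field_simps)

lemma lsc_minus_cont:
  fixes v \<phi> :: "'a::metric_space \<Rightarrow> real"
  assumes "lsc v" "continuous_on UNIV \<phi>"
  shows "lsc (\<lambda>x. v x - \<phi> x)"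
  unfolding lsc_def
proof (intro allI impI)
  fix x a assume a: "a < v x - \<phi> x"
  define e where "e = (v x - \<phi> x - a) / 2"
  have e: "e > 0" using a by (simp add: e_def)
  have 1: "eventually (\<lambda>y. v x - e < v y) (at x)"
    using assms(1) e unfolding lsc_def by simp
  have "isCont \<phi> x" using assms(2) by (simp add: continuous_on_eq_continuous_at)
  then have "(\<phi> \<longlongrightarrow> \<phi> x) (at x)" by (simp add: isCont_def)
  then have 2: "eventually (\<lambda>y. dist (\<phi> y) (\<phi> x) < e) (at x)"
    using e by (rule tendstoD)
  have 3: "a < v y - \<phi> y" if h: "v x - e < v y" "dist (\<phi> y) (\<phi> x) < e" for y
  proof -
    have "\<phi> y - \<phi> x < e" using h(2) by (simp add: dist_real_def abs_less_iff)
    then show ?thesis using h(1) e_def by (simp add: field_simps)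
  qed
  show "eventually (\<lambda>y. a < v y - \<phi> y) (at x)"
    using eventually_conj[OF 1 2] by (rule eventually_mono) (use 3 in blast)
qed

lemma lsc_attains_min:
  fixes f :: "'a::topological_space \<Rightarrow> real"
  assumes "lsc f" "compact K" "K \<noteq> {}"
  shows "\<exists>x\<in>K. \<forall>y\<in>K. f x \<le> f y"
proof (rule ccontr)
  assume "\<not> ?thesis"
  then have "\<forall>x\<in>K. \<exists>y\<in>K. f y < f x" by (auto simp: not_le)
  then obtain sel where sel: "\<And>x. x \<in> K \<Longrightarrow> sel x \<in> K \<and> f (sel x) < f x" by metis
  have "\<forall>x\<in>K. \<exists>U. open U \<and> x \<in> U \<and> (\<forall>y\<in>U. f (sel x) < f y)"
  proof
    fix x assume x: "x \<in> K"
    have "eventually (\<lambda>y. f (sel x) < f y) (at x)"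
      using assms(1) sel[OF x] unfolding lsc_def by blast
    then obtain U where U: "open U" "x \<in> U" "\<And>y. y \<in> U \<Longrightarrow> y \<noteq> x \<Longrightarrow> f (sel x) < f y"
      unfolding eventually_at_topological by blast
    then show "\<exists>U. open U \<and> x \<in> U \<and> (\<forall>y\<in>U. f (sel x) < f y)"
      using sel[OF x] by (metis)
  qed
  then obtain U where U: "\<And>x. x \<in> K \<Longrightarrow> open (U x) \<and> x \<in> U x \<and> (\<forall>y\<in>U x. f (sel x) < f y)"
    by metis
  obtain C where C: "C \<subseteq> K" "finite C" "K \<subseteq> (\<Union>c\<in>C. U c)"
    by (rule compactE_image[OF assms(2), of K U]) (use U in auto)
  have Cne: "C \<noteq> {}" using C(3) assms(3) by auto
  define m where "m = Min ((\<lambda>c. f (sel c)) ` C)"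
  have "m \<in> (\<lambda>c. f (sel c)) ` C" unfolding m_def using C(2) Cne by (intro Min_in) auto
  then obtain j where j: "j \<in> C" "m = f (sel j)" by auto
  have "sel j \<in> K" using sel j(1) C(1) by auto
  then obtain i where i: "i \<in> C" "sel j \<in> U i" using C(3) by auto
  have "f (sel i) < f (sel j)" using U i C(1) by auto
  moreover have "m \<le> f (sel i)" unfolding m_def using C(2) i(1) by (intro Min_le) auto
  ultimately show False using j by simp
qed

lemma lsc_closed_le:
  fixes f :: "'a::topological_space \<Rightarrow> real"
  assumes "lsc f"
  shows "closed {x. f x \<le> m}"
  unfolding closed_def
proof -
  have "open {x. m < f x}"
    unfolding open_subopen[of "{x. m < f x}"]
  proof (intro ballI)
    fix x assume "x \<in> {x. m < f x}"
    then have "eventually (\<lambda>y. m < f y) (at x)" using assms unfolding lsc_def by auto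
    then obtain U where U: "open U" "x \<in> U" "\<And>y. y \<in> U \<Longrightarrow> y \<noteq> x \<Longrightarrow> m < f y"
      unfolding eventually_at_topological by blast
    then show "\<exists>T. open T \<and> x \<in> T \<and> T \<subseteq> {x. m < f x}"
      using \<open>x \<in> {x. m < f x}\<close> by (intro exI[of _ U]) auto
  qed
  moreover have "- {x. f x \<le> m} = {x. m < f x}" by auto
  ultimately show "open (- {x. f x \<le> m})" by simp
qed

locale setting =
  fixes F :: "real^'n \<Rightarrow> real \<Rightarrow> real^'n \<Rightarrow> real^'n^'n \<Rightarrow> real"
    and lam Lam :: real
    and b :: "real^'n \<Rightarrow> real^'n"
    and g c :: "real^'n \<Rightarrow> real"
  assumes lam: "0 < lam" "lam \<le> Lam"
    and elliptic: "\<And>x t p X Q. symmetric_mat X \<Longrightarrow> symmetric_mat Q \<Longrightarrow> psd_mat Q \<Longrightarrow>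
        lam * trace Q \<le> F x t p X - F x t p (X + Q) \<and> F x t p X - F x t p (X + Q) \<le> Lam * trace Q"
    and F_bound: "\<And>x t p. F x t p 0 \<le> - (b x \<bullet> p) + g x * norm p + c x * t"
    and g_nonneg: "\<And>x. g x \<ge> 0"
begin

lemma pucci:
  assumes "symmetric_mat A" "symmetric_mat B" "psd_mat A" "psd_mat B"
  shows "F x t p (A - B) \<le> F x t p 0 - lam * trace A + Lam * trace B"
proof -
  have 1: "F x t p (A - B) - F x t p (A - B + B) \<le> Lam * trace B"
    using elliptic[OF sym_diff[OF assms(1,2)] assms(2,4)] by blast
  have 2: "lam * trace A \<le> F x t p 0 - F x t p (0 + A)"
    using elliptic[OF sym_zero assms(1,3)] by blast
  show ?thesis using 1 2 by simp
qed

lemma radial_bound: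
  assumes y: "y \<noteq> 0" and G1: "G1 \<le> 0" and rad: "2 * G1 + 4 * G2 * (norm y)^2 \<ge> 0"
  shows "F x t ((2 * G1) *\<^sub>R y) ((2 * G1) *\<^sub>R mat 1 + (4 * G2) *\<^sub>R opm y)
     \<le> -2 * G1 * (b x \<bullet> y + g x * norm y) + c x * t - lam * (2 * G1 + 4 * G2 * (norm y)^2)
        - 2 * (real CARD('n) - 1) * Lam * G1"
proof -
  define s where "s = (norm y)^2"
  have s0: "s > 0" using y by (simp add: s_def)
  define P where "P = (1/s) *\<^sub>R opm y"
  define A where "A = (2 * G1 + 4 * G2 * s) *\<^sub>R P"
  define B where "B = (-2 * G1) *\<^sub>R (mat 1 - P)"
  have symP: "symmetric_mat P" unfolding P_def by (intro sym_scale opm_sym)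
  have symA: "symmetric_mat A" unfolding A_def by (intro sym_scale symP)
  have symB: "symmetric_mat B" unfolding B_def by (intro sym_scale sym_diff mat1_sym symP)
  have psdA: "psd_mat A" unfolding A_def P_def
    using rad by (intro psd_scale opm_psd) (auto simp: s_def s0 less_imp_le)
  have psdB: "psd_mat B" unfolding B_def P_def s_def
    using G1 by (intro psd_scale psd_proj y) auto
  have trP: "trace P = 1" using s0 by (simp add: P_def trace_scale opm_trace s_def)
  have trA: "trace A = 2 * G1 + 4 * G2 * s" by (simp add: A_def trace_scale trP)
  have trB: "trace B = -2 * G1 * (real CARD('n) - 1)"
  proof -
    have "trace B = (-2 * G1) * trace (mat 1 - P)" unfolding B_def by (rule trace_scale)
    then show ?thesis by (simp add: trace_sub trace_I trP)
  qed
  have AB: "A - B = (2 * G1) *\<^sub>R mat 1 + (4 * G2) *\<^sub>R opm y"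
    using s0 by (simp add: A_def B_def P_def vec_eq_iff field_simps)
  have "F x t ((2 * G1) *\<^sub>R y) (A - B) \<le> F x t ((2 * G1) *\<^sub>R y) 0 - lam * trace A + Lam * trace B"
    by (rule pucci[OF symA symB psdA psdB])
  also have "F x t ((2 * G1) *\<^sub>R y) 0 \<le> -2 * G1 * (b x \<bullet> y + g x * norm y) + c x * t"
  proof -
    have "F x t ((2 * G1) *\<^sub>R y) 0 \<le> - (b x \<bullet> ((2 * G1) *\<^sub>R y)) + g x * norm ((2 * G1) *\<^sub>R y) + c x * t"
      by (rule F_bound)
    also have "norm ((2 * G1) *\<^sub>R y) = -2 * G1 * norm y" using G1 by simp
    finally show ?thesis by (simp add: algebra_simps)
  qed
  finally show ?thesis unfolding AB trA trB s_def by (simp add: algebra_simps)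
qed

end


locale setting2 = setting F lam Lam b g c
  for F :: "real^'n \<Rightarrow> real \<Rightarrow> real^'n \<Rightarrow> real^'n^'n \<Rightarrow> real"
    and lam Lam :: real
    and b :: "real^'n \<Rightarrow> real^'n"
    and g c :: "real^'n \<Rightarrow> real" +
  fixes v :: "real^'n \<Rightarrow> real"
  assumes super: "viscosity_supersolution F v"
    and b_cont: "continuous_on UNIV b"
    and g_cont: "continuous_on UNIV g"
    and c_nonneg: "\<And>x. c x \<ge> 0"
    and alt: "(\<forall>x. c x = 0) \<or> (\<forall>x. v x \<le> 0)"
begin

lemma v_lsc: "lsc v" using super by (simp add: viscosity_supersolution_def)

lemma cv: "c x * v x \<le> 0"
  using alt c_nonneg[of x] by (auto simp: mult_nonneg_nonpos)

lemma touch: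
  fixes G G1 G2 :: "real \<Rightarrow> real" and z x0 :: "real^'n"
  assumes d1: "\<And>s. s \<ge> 0 \<Longrightarrow> (G has_real_derivative G1 s) (at s)"
    and d2: "\<And>s. s \<ge> 0 \<Longrightarrow> (G1 has_real_derivative G2 s) (at s)"
    and c2: "\<And>s. s \<ge> 0 \<Longrightarrow> isCont G2 s"
    and y: "x0 \<noteq> z"
    and neg: "G1 ((norm (x0 - z))^2) \<le> 0"
    and rad: "2 * G1 ((norm (x0 - z))^2) + 4 * G2 ((norm (x0 - z))^2) * (norm (x0 - z))^2 \<ge> 0"
    and r: "r > 0"
    and mn: "\<forall>y\<in>ball x0 r. v x0 - G ((norm (x0 - z))^2) \<le> v y - G ((norm (y - z))^2)"
  shows "0 \<le> -2 * G1 ((norm (x0 - z))^2) * (b x0 \<bullet> (x0 - z) + g x0 * norm (x0 - z)) + c x0 * v x0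
      - lam * (2 * G1 ((norm (x0 - z))^2) + 4 * G2 ((norm (x0 - z))^2) * (norm (x0 - z))^2)
      - 2 * (real CARD('n) - 1) * Lam * G1 ((norm (x0 - z))^2)"
proof -
  let ?s = "(norm (x0 - z))^2"
  have C2: "C2_with (\<lambda>x. G ((norm (x - z))^2)) (\<lambda>x. (2 * G1 ((norm (x - z))^2)) *\<^sub>R (x - z))
     (\<lambda>x. (2 * G1 ((norm (x - z))^2)) *\<^sub>R mat 1 + (4 * G2 ((norm (x - z))^2)) *\<^sub>R opm (x - z))"
    by (rule radial_C2[OF d1 d2 c2])
  have "F x0 (v x0) ((2 * G1 ?s) *\<^sub>R (x0 - z)) ((2 * G1 ?s) *\<^sub>R mat 1 + (4 * G2 ?s) *\<^sub>R opm (x0 - z)) \<ge> 0"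
    using super C2 r mn unfolding viscosity_supersolution_def by blast
  moreover have "F x0 (v x0) ((2 * G1 ?s) *\<^sub>R (x0 - z)) ((2 * G1 ?s) *\<^sub>R mat 1 + (4 * G2 ?s) *\<^sub>R opm (x0 - z))
     \<le> -2 * G1 ?s * (b x0 \<bullet> (x0 - z) + g x0 * norm (x0 - z)) + c x0 * v x0 - lam * (2 * G1 ?s + 4 * G2 ?s * (norm (x0 - z))^2)
        - 2 * (real CARD('n) - 1) * Lam * G1 ?s"
    by (rule radial_bound) (use y neg rad in auto)
  ultimately show ?thesis by linarith
qed


lemma strong_min:
  assumes x1: "\<forall>y. v x1 \<le> v y"
  shows "v z = v x1"
proof (rule ccontr)
  assume nz: "v z \<noteq> v x1"
  define m where "m = v x1"
  have vz: "v z > m" using x1 nz unfolding m_def by (metis order_le_less)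
  have vm: "\<And>y. m \<le> v y" using x1 m_def by auto
  define Z where "Z = {x. v x \<le> m}"
  have Zc: "closed Z" unfolding Z_def by (rule lsc_closed_le[OF v_lsc])
  have "x1 \<in> Z" unfolding Z_def m_def by simp
  then obtain xs where xs: "xs \<in> Z" "\<And>y. y \<in> Z \<Longrightarrow> dist z xs \<le> dist z y"
    using distance_attains_inf[OF Zc, of z] by blast
  define \<rho> where "\<rho> = dist z xs"
  have vxs: "v xs = m" using xs(1) vm[of xs] unfolding Z_def by auto
  have "xs \<noteq> z" using vxs vz by auto
  then have \<rho>0: "\<rho> > 0" unfolding \<rho>_def by simp
  have inball: "\<And>y. dist z y < \<rho> \<Longrightarrow> v y > m"
  proof -
    fix y assume "dist z y < \<rho>"
    then have "y \<notin> Z" using xs(2)[of y] unfolding \<rho>_def by auto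
    then show "v y > m" unfolding Z_def by auto
  qed
  have "sphere z (\<rho>/2) \<noteq> {}" using \<rho>0 by simp
  then obtain q where q: "q \<in> sphere z (\<rho>/2)" "\<And>y. y \<in> sphere z (\<rho>/2) \<Longrightarrow> v q \<le> v y"
    using lsc_attains_min[OF v_lsc compact_sphere] by blast
  define \<mu> where "\<mu> = v q - m"
  have \<mu>0: "\<mu> > 0" using inball[of q] q(1) \<rho>0 unfolding \<mu>_def by simp
  have "compact ((\<lambda>x. norm (b x) + g x) ` cball z \<rho>)"
    by (intro compact_continuous_image continuous_on_add continuous_on_norm
        continuous_on_subset[OF b_cont] continuous_on_subset[OF g_cont] compact_cball) auto
  then obtain Cb0 where "\<forall>u\<in>(\<lambda>x. norm (b x) + g x) ` cball z \<rho>. norm u \<le> Cb0"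
    using compact_imp_bounded bounded_iff by metis
  then have Cb0: "\<And>x. x \<in> cball z \<rho> \<Longrightarrow> norm (b x) + g x \<le> Cb0" by force
  define Cb where "Cb = max Cb0 0"
  have Cb: "\<And>x. x \<in> cball z \<rho> \<Longrightarrow> norm (b x) + g x \<le> Cb" "Cb \<ge> 0"
    using Cb0 unfolding Cb_def by force+
  define N where "N = real CARD('n)"
  have N1: "N \<ge> 1" unfolding N_def by simp
  define K0 where "K0 = 2 * (Cb * \<rho>) + 2 * lam + 2 * (N - 1) * Lam + 1"
  have K0: "K0 > 0" unfolding K0_def using Cb(2) \<rho>0 lam N1 by (simp add: add_nonneg_pos)
  define \<alpha> where "\<alpha> = K0 / (lam * \<rho>^2) + 2 / \<rho>^2"
  have \<alpha>0: "\<alpha> > 0" unfolding \<alpha>_def using K0 lam \<rho>0 by (simp add: add_pos_pos)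
  have \<alpha>1: "\<alpha> * lam * \<rho>^2 \<ge> K0"
  proof -
    have "\<alpha> * lam * \<rho>^2 = K0 + 2 * lam" unfolding \<alpha>_def using lam \<rho>0 by (simp add: field_simps)
    then show ?thesis using lam by simp
  qed
  have \<alpha>2: "\<alpha> * \<rho>^2 \<ge> 2"
  proof -
    have "\<alpha> * \<rho>^2 = K0 / lam + 2" unfolding \<alpha>_def using lam \<rho>0 by (simp add: field_simps)
    then show ?thesis using K0 lam by simp
  qed
  define G where "G = (\<lambda>s. m + \<mu> * (exp (- \<alpha> * s) - exp (- \<alpha> * \<rho>^2)))"
  define G1 where "G1 = (\<lambda>s. - \<alpha> * \<mu> * exp (- \<alpha> * s))"
  define G2 where "G2 = (\<lambda>s. \<alpha>^2 * \<mu> * exp (- \<alpha> * s))"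
  have d1: "(G has_real_derivative G1 s) (at s)" for s
    unfolding G_def G1_def by (auto intro!: derivative_eq_intros)
  have d2: "(G1 has_real_derivative G2 s) (at s)" for s
    unfolding G1_def G2_def by (auto intro!: derivative_eq_intros simp: power2_eq_square)
  have c2: "isCont G2 s" for s
    unfolding G2_def by (intro continuous_intros)
  have strict: False
    if x: "\<rho>/2 \<le> dist z x" "dist z x \<le> \<rho>" and r: "r > 0"
      and mn: "\<forall>y\<in>ball x r. v x - G ((norm (x - z))^2) \<le> v y - G ((norm (y - z))^2)" for x r
  proof -
    define t where "t = norm (x - z)"
    have t: "t = dist z x" unfolding t_def by (simp add: dist_norm norm_minus_commute)
    have t0: "t > 0" using x(1) \<rho>0 t by linarith
    have xz: "x \<noteq> z" using t0 t by auto
    define E where "E = exp (- \<alpha> * t^2)"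
    have E0: "E > 0" unfolding E_def by simp
    have xin: "x \<in> cball z \<rho>" using x by simp
    have ts: "t^2 \<ge> \<rho>^2 / 4"
    proof -
      have "(\<rho>/2)^2 \<le> t^2" using x t \<rho>0 by (intro power_mono) auto
      then show ?thesis by (simp add: power_divide)
    qed
    have as: "\<alpha> * t^2 \<ge> 1/2"
    proof -
      have "\<alpha> * t^2 \<ge> \<alpha> * (\<rho>^2 / 4)" using ts \<alpha>0 by (intro mult_left_mono) auto
      then show ?thesis using \<alpha>2 by simp
    qed
    have neg: "G1 (t^2) \<le> 0" unfolding G1_def using \<alpha>0 \<mu>0 by simp
    have rad: "2 * G1 (t^2) + 4 * G2 (t^2) * t^2 \<ge> 0"
    proof -
      have "2 * G1 (t^2) + 4 * G2 (t^2) * t^2 = 2 * \<alpha> * \<mu> * E * (2 * (\<alpha> * t^2) - 1)"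
        unfolding G1_def G2_def E_def by (simp add: algebra_simps power2_eq_square)
      moreover have "2 * (\<alpha> * t^2) - 1 \<ge> 0" using as by simp
      ultimately show ?thesis using \<alpha>0 \<mu>0 E0 by simp
    qed
    have T: "b x \<bullet> (x - z) + g x * t \<le> Cb * \<rho>"
    proof -
      have "b x \<bullet> (x - z) \<le> norm (b x) * t" unfolding t_def by (rule norm_cauchy_schwarz)
      then have "b x \<bullet> (x - z) + g x * t \<le> (norm (b x) + g x) * t" by (simp add: algebra_simps)
      also have "\<dots> \<le> Cb * t" using Cb(1)[OF xin] t0 by (intro mult_right_mono) auto
      also have "\<dots> \<le> Cb * \<rho>" using Cb(2) x t by (intro mult_left_mono) auto
      finally show ?thesis .
    qed
    have W: "2 * (b x \<bullet> (x - z) + g x * t) + 2 * lam - 4 * \<alpha> * lam * t^2 + 2 * (N - 1) * Lam < 0"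
    proof -
      have "4 * \<alpha> * lam * t^2 \<ge> \<alpha> * lam * \<rho>^2"
      proof -
        have "4 * \<alpha> * lam * t^2 = (\<alpha> * lam) * (4 * t^2)" by simp
        also have "\<dots> \<ge> (\<alpha> * lam) * \<rho>^2" using ts \<alpha>0 lam by (intro mult_left_mono) auto
        finally show ?thesis by simp
      qed
      then show ?thesis using W_aux[OF _ \<alpha>1[unfolded K0_def] T] by simp
    qed
    have "0 \<le> -2 * G1 ((norm (x - z))^2) * (b x \<bullet> (x - z) + g x * norm (x - z)) + c x * v x
      - lam * (2 * G1 ((norm (x - z))^2) + 4 * G2 ((norm (x - z))^2) * (norm (x - z))^2)
      - 2 * (real CARD('n) - 1) * Lam * G1 ((norm (x - z))^2)"
      by (rule touch[OF d1 d2 c2 xz _ _ r mn]) (use neg rad in \<open>simp_all add: t_def\<close>)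
    also have "\<dots> = \<alpha> * \<mu> * E * (2 * (b x \<bullet> (x - z) + g x * t) + 2 * lam - 4 * \<alpha> * lam * t^2 + 2 * (N - 1) * Lam) + c x * v x"
      unfolding G1_def G2_def E_def t_def N_def by (simp add: algebra_simps power2_eq_square)
    also have "\<dots> < 0"
    proof -
      have "\<alpha> * \<mu> * E * (2 * (b x \<bullet> (x - z) + g x * t) + 2 * lam - 4 * \<alpha> * lam * t^2 + 2 * (N - 1) * Lam) < 0"
        using W \<alpha>0 \<mu>0 E0 by (simp add: mult_pos_neg)
      then show ?thesis using cv[of x] by linarith
    qed
    finally show False by simp
  qed
  have nd: "\<And>x. norm (x - z) = dist z x" by (simp add: dist_norm norm_minus_commute)
  define \<phi> where "\<phi> = (\<lambda>x. G ((norm (x - z))^2))"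
  have \<phi>c: "continuous_on UNIV \<phi>" unfolding \<phi>_def G_def by (intro continuous_intros)
  have \<phi>le: "\<phi> x \<le> m" if "\<rho> \<le> dist z x" for x
  proof -
    have "\<rho>^2 \<le> (norm (x - z))^2" using that \<rho>0 nd[of x] by (intro power_mono) auto
    then have "- \<alpha> * (norm (x - z))^2 \<le> - \<alpha> * \<rho>^2" using \<alpha>0 by simp
    then have "exp (- \<alpha> * (norm (x - z))^2) \<le> exp (- \<alpha> * \<rho>^2)" by simp
    then show ?thesis unfolding \<phi>_def G_def using \<mu>0 by (simp add: mult_le_0_iff)
  qed
  have \<phi>lt: "\<phi> x < m + \<mu>" for x
  proof -
    have "exp (- \<alpha> * (norm (x - z))^2) \<le> 1" using \<alpha>0 by simp
    moreover have "exp (- \<alpha> * \<rho>^2) > 0" by simp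
    ultimately have "exp (- \<alpha> * (norm (x - z))^2) - exp (- \<alpha> * \<rho>^2) < 1" by linarith
    then have "\<mu> * (exp (- \<alpha> * (norm (x - z))^2) - exp (- \<alpha> * \<rho>^2)) < \<mu> * 1"
      using \<mu>0 by (intro mult_strict_left_mono) auto
    then show ?thesis unfolding \<phi>_def G_def by simp
  qed
  have \<phi>xs: "\<phi> xs = m" unfolding \<phi>_def G_def using nd[of xs] by (simp add: \<rho>_def)
  have claimA: "\<phi> x \<le> v x" if x: "\<rho>/2 \<le> dist z x" for x
  proof (cases "\<rho> \<le> dist z x")
    case True
    then show ?thesis using \<phi>le[OF True] vm[of x] by linarith
  next
    case False
    define K where "K = cball z \<rho> - ball z (\<rho>/2)"
    have Kc: "compact K" unfolding K_def by (intro compact_diff compact_cball open_ball)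
    have xK: "x \<in> K" unfolding K_def using x False by auto
    obtain x0 where x0: "x0 \<in> K" "\<And>y. y \<in> K \<Longrightarrow> v x0 - \<phi> x0 \<le> v y - \<phi> y"
      using lsc_attains_min[OF lsc_minus_cont[OF v_lsc \<phi>c] Kc] xK by blast
    show ?thesis
    proof (rule ccontr)
      assume "\<not> ?thesis"
      then have neg0: "v x0 - \<phi> x0 < 0" using x0(2)[OF xK] by linarith
      have d0: "\<rho>/2 \<le> dist z x0" "dist z x0 \<le> \<rho>" using x0(1) unfolding K_def by auto
      have n1: "dist z x0 \<noteq> \<rho>/2"
      proof
        assume "dist z x0 = \<rho>/2"
        then have "v q \<le> v x0" using q(2)[of x0] by simp
        then show False using neg0 \<phi>lt[of x0] unfolding \<mu>_def by linarith
      qed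
      have n2: "dist z x0 \<noteq> \<rho>"
      proof
        assume "dist z x0 = \<rho>"
        then show False using neg0 \<phi>le[of x0] vm[of x0] by linarith
      qed
      define r where "r = min (dist z x0 - \<rho>/2) (\<rho> - dist z x0)"
      have r0: "r > 0" unfolding r_def using d0 n1 n2 by auto
      have "ball x0 r \<subseteq> K"
      proof
        fix y assume "y \<in> ball x0 r"
        then have "dist x0 y < r" by simp
        moreover have "dist z y \<le> dist z x0 + dist x0 y" "dist z x0 \<le> dist z y + dist x0 y"
          by (rule dist_triangle, metis dist_commute dist_triangle)
        ultimately show "y \<in> K" unfolding K_def r_def by auto
      qed
      then have "\<forall>y\<in>ball x0 r. v x0 - G ((norm (x0 - z))^2) \<le> v y - G ((norm (y - z))^2)"
        using x0(2) unfolding \<phi>_def by auto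
      then show False using strict[OF d0 r0] by blast
    qed
  qed
  have "\<forall>y\<in>ball xs (\<rho>/2). v xs - G ((norm (xs - z))^2) \<le> v y - G ((norm (y - z))^2)"
  proof
    fix y assume "y \<in> ball xs (\<rho>/2)"
    then have "dist xs y < \<rho>/2" by simp
    moreover have "dist z xs \<le> dist z y + dist xs y" by (metis dist_commute dist_triangle)
    ultimately have "\<rho>/2 \<le> dist z y" unfolding \<rho>_def by linarith
    then have "\<phi> y \<le> v y" by (rule claimA)
    then show "v xs - G ((norm (xs - z))^2) \<le> v y - G ((norm (y - z))^2)"
      using \<phi>xs vxs unfolding \<phi>_def by simp
  qed
  moreover have "\<rho>/2 \<le> dist z xs" "dist z xs \<le> \<rho>" "\<rho>/2 > 0" using \<rho>0 unfolding \<rho>_def by auto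
  ultimately show False using strict by blast
qed


lemma touch0:
  fixes G G1 G2 :: "real \<Rightarrow> real" and x0 :: "real^'n"
  assumes d1: "\<And>s. s \<ge> 0 \<Longrightarrow> (G has_real_derivative G1 s) (at s)"
    and d2: "\<And>s. s \<ge> 0 \<Longrightarrow> (G1 has_real_derivative G2 s) (at s)"
    and c2: "\<And>s. s \<ge> 0 \<Longrightarrow> isCont G2 s"
    and y: "x0 \<noteq> 0"
    and neg: "G1 ((norm x0)^2) \<le> 0"
    and rad: "2 * G1 ((norm x0)^2) + 4 * G2 ((norm x0)^2) * (norm x0)^2 \<ge> 0"
    and r: "r > 0"
    and mn: "\<forall>y\<in>ball x0 r. v x0 - G ((norm x0)^2) \<le> v y - G ((norm y)^2)"
  shows "0 \<le> -2 * G1 ((norm x0)^2) * (b x0 \<bullet> x0 + g x0 * norm x0) + c x0 * v x0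
      - lam * (2 * G1 ((norm x0)^2) + 4 * G2 ((norm x0)^2) * (norm x0)^2)
      - 2 * (real CARD('n) - 1) * Lam * G1 ((norm x0)^2)"
  using touch[OF d1 d2 c2, of x0 0 r] assms by simp

lemma outer:
  assumes Ro: "R\<^sub>o > 0"
    and growth: "\<And>x. norm x \<ge> R\<^sub>o \<Longrightarrow>
        b x \<bullet> x + g x * norm x \<le> c x * (norm x)\<^sup>2 * ln (norm x) + lam - (real CARD('n) - 1) * Lam"
    and liminf: "\<forall>\<epsilon>>0. \<exists>R. \<forall>x. norm x \<ge> R \<longrightarrow> v x / ln (norm x) \<ge> - \<epsilon>"
  shows "\<exists>x1. \<forall>y. v x1 \<le> v y"
proof -
  define R1 where "R1 = max R\<^sub>o 3"
  have R1: "R1 \<ge> 3" "R1 \<ge> R\<^sub>o" unfolding R1_def by auto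
  have ln1: "\<And>r::real. r \<ge> 3 \<Longrightarrow> ln r \<ge> 1"
  proof -
    fix r :: real assume "r \<ge> 3"
    then show "ln r \<ge> 1" using exp_le by (subst ln_ge_iff) auto
  qed
  have "cball (0::real^'n) R1 \<noteq> {}" using R1 by simp
  then obtain x1 where x1: "x1 \<in> cball 0 R1" "\<And>y. y \<in> cball 0 R1 \<Longrightarrow> v x1 \<le> v y"
    using lsc_attains_min[OF v_lsc compact_cball] by blast
  define M where "M = v x1"
  have Mc: "c x \<noteq> 0 \<Longrightarrow> M \<le> 0" for x using alt unfolding M_def by auto
  have "\<forall>y. M \<le> v y"
  proof (rule ccontr)
    assume "\<not> (\<forall>y. M \<le> v y)"
    then obtain xh where xh: "v xh < M" by (auto simp: not_le)
    have xhn: "norm xh > R1" using x1(2)[of xh] xh unfolding M_def by (metis mem_cball_0 not_le)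
    define \<gamma> where "\<gamma> = M - v xh"
    have \<gamma>0: "\<gamma> > 0" using xh unfolding \<gamma>_def by simp
    define sh where "sh = (norm xh)^2"
    define Lh where "Lh = ln (sh + 1)"
    have Lh0: "Lh \<ge> 0" unfolding Lh_def sh_def by simp
    define a where "a = \<gamma> / (1 + Lh)"
    have a0: "a > 0" unfolding a_def using \<gamma>0 Lh0 by simp
    have aL: "a * Lh < \<gamma>"
    proof -
      have "a * (1 + Lh) = \<gamma>" unfolding a_def using Lh0 by simp
      then show ?thesis using a0 by (simp add: algebra_simps)
    qed
    obtain R where R: "\<And>x. norm x \<ge> R \<Longrightarrow> v x / ln (norm x) \<ge> - (a/2)"
      using liminf a0 by (meson half_gt_zero)
    define R2 where "R2 = max (max R (norm xh + 1)) (max (exp (2 * \<bar>M\<bar> / a + 1)) (R1 + 1))"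
    have R2: "R2 \<ge> R" "R2 \<ge> norm xh + 1" "R2 \<ge> exp (2 * \<bar>M\<bar> / a + 1)" "R2 \<ge> R1 + 1"
      unfolding R2_def by auto
    have R2g: "R2 > R1" "R2 \<ge> 3" using R2 R1 by auto
    define \<beta> where "\<beta> = a / (R2^2 + 1)"
    define D where "D = 2 * (R2^2 + 1)"
    define \<sigma> where "\<sigma> = 1 / D"
    have pR2: "R2^2 + 1 > 0" using zero_le_power2[of R2] by linarith
    have \<beta>0: "\<beta> > 0" unfolding \<beta>_def using a0 pR2 by (simp add: divide_pos_pos)
    have tw: "D \<ge> 2" unfolding D_def by (simp add: algebra_simps)
    have \<sigma>0: "\<sigma> > 0" "\<sigma> \<le> 1" unfolding \<sigma>_def using tw by (simp_all add: divide_le_eq)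
    have \<beta>R2: "\<beta> * R2^2 \<le> a"
    proof -
      have "\<beta> * R2^2 = a * (R2^2 / (R2^2 + 1))" unfolding \<beta>_def by simp
      also have "\<dots> \<le> a * 1" using a0 pR2 by (intro mult_left_mono) (auto simp: divide_le_eq)
      finally show ?thesis by simp
    qed
    define G where "G = (\<lambda>s. M - (a/2) * ln (s + \<sigma>) + \<beta> * s / 2)"
    define G1 where "G1 = (\<lambda>s. - (a/2) * inverse (s + \<sigma>) + \<beta> / 2)"
    define G2 where "G2 = (\<lambda>s. (a/2) * inverse ((s + \<sigma>)^2))"
    have d1: "(G has_real_derivative G1 s) (at s)" if "s \<ge> 0" for s
    proof -
      have "s + \<sigma> > 0" using that \<sigma>0 by simp
      then show ?thesis unfolding G_def G1_def
        by (auto intro!: derivative_eq_intros simp: field_simps)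
    qed
    have d2: "(G1 has_real_derivative G2 s) (at s)" if "s \<ge> 0" for s
    proof -
      have "s + \<sigma> > 0" using that \<sigma>0 by simp
      then show ?thesis unfolding G1_def G2_def
        by (auto intro!: derivative_eq_intros simp: power2_eq_square)
    qed
    have c2: "isCont G2 s" if "s \<ge> 0" for s
    proof -
      have "s + \<sigma> > 0" using that \<sigma>0 by simp
      then show ?thesis unfolding G2_def by (intro continuous_intros) auto
    qed
    define \<phi> where "\<phi> = (\<lambda>x::real^'n. G ((norm x)^2))"
    have \<phi>c: "continuous_on UNIV \<phi>"
    proof (rule continuous_at_imp_continuous_on, intro ballI)
      fix x :: "real^'n"
      have "isCont G ((norm x)^2)" using d1[of "(norm x)^2"] DERIV_isCont by simp
      then show "isCont \<phi> x" unfolding \<phi>_def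
        by (rule isCont_o2[rotated]) (intro continuous_power continuous_norm continuous_ident)
    qed
    define K where "K = cball (0::real^'n) R2 - ball 0 R1"
    have Kc: "compact K" unfolding K_def by (intro compact_diff compact_cball open_ball)
    have xhK: "xh \<in> K" unfolding K_def using xhn R2 by auto
    obtain x0 where x0: "x0 \<in> K" "\<And>y. y \<in> K \<Longrightarrow> v x0 - \<phi> x0 \<le> v y - \<phi> y"
      using lsc_attains_min[OF lsc_minus_cont[OF v_lsc \<phi>c] Kc] xhK by blast
    have xhneg: "v xh - \<phi> xh < 0"
    proof -
      have "ln (sh + \<sigma>) \<le> Lh" unfolding Lh_def using \<sigma>0 by (intro ln_mono) (auto simp: sh_def add_nonneg_pos)
      then have "(a/2) * ln (sh + \<sigma>) \<le> (a/2) * Lh" using a0 by (intro mult_left_mono) auto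
      moreover have "\<beta> * sh / 2 \<ge> 0" using \<beta>0 unfolding sh_def by simp
      moreover have "(a/2) * Lh \<le> a * Lh" using a0 Lh0 by simp
      ultimately have "\<phi> xh \<ge> M - a * Lh" unfolding \<phi>_def G_def sh_def by linarith
      then show ?thesis using aL unfolding \<gamma>_def by linarith
    qed
    then have neg0: "v x0 - \<phi> x0 < 0" using x0(2)[OF xhK] by linarith
    have d0: "R1 \<le> norm x0" "norm x0 \<le> R2" using x0(1) unfolding K_def by auto
    have n1: "norm x0 \<noteq> R1"
    proof
      assume e: "norm x0 = R1"
      then have "v x1 \<le> v x0" using x1(2)[of x0] by simp
      moreover have "\<phi> x0 \<le> M"
      proof -
        have h: "R1 * 1 \<le> R1 * R1" using R1 by (intro mult_left_mono) auto
        have "R1^2 + \<sigma> \<ge> 3" unfolding power2_eq_square using h R1 \<sigma>0 by linarith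
        then have "ln (R1^2 + \<sigma>) \<ge> 1" by (rule ln1)
        then have "(a/2) * ln (R1^2 + \<sigma>) \<ge> (a/2) * 1" using a0 by (intro mult_left_mono) auto
        moreover have "\<beta> * R1^2 \<le> \<beta> * R2^2" using \<beta>0 R2g R1 by (intro mult_left_mono power_mono) auto
        ultimately show ?thesis unfolding \<phi>_def G_def e using \<beta>R2 by linarith
      qed
      ultimately show False using neg0 unfolding M_def by linarith
    qed
    have n2: "norm x0 \<noteq> R2"
    proof
      assume e: "norm x0 = R2"
      have lnR2: "ln R2 > 0" using R2g by simp
      have "v x0 / ln R2 \<ge> - (a/2)" using R[of x0] e R2 by simp
      then have vx0: "v x0 \<ge> - (a/2) * ln R2" using lnR2 by (simp add: le_divide_eq)
      have "ln (R2^2 + \<sigma>) \<ge> ln (R2^2)" using \<sigma>0 R2g by (intro ln_mono) auto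
      then have l2: "ln (R2^2 + \<sigma>) \<ge> 2 * ln R2" by (simp add: ln_realpow)
      have p1: "(a/2) * ln (R2^2 + \<sigma>) \<ge> (a/2) * (2 * ln R2)" using l2 a0 by (intro mult_left_mono) auto
      have p2: "(a/2) * (2 * ln R2) = 2 * ((a/2) * ln R2)" by simp
      have p3: "\<phi> x0 = M - (a/2) * ln (R2^2 + \<sigma>) + \<beta> * R2^2 / 2" unfolding \<phi>_def G_def e by simp
      have p4: "ln R2 \<ge> 2 * \<bar>M\<bar> / a + 1"
        using R2(3) R2g by (subst ln_ge_iff) auto
      have p5: "(a/2) * ln R2 \<ge> (a/2) * (2 * \<bar>M\<bar> / a + 1)" using p4 a0 by (intro mult_left_mono) auto
      have p6: "(a/2) * (2 * \<bar>M\<bar> / a + 1) = \<bar>M\<bar> + a/2" using a0 by (simp add: field_simps)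
      have p7: "M \<le> \<bar>M\<bar>" by simp
      show False using neg0 vx0 p1 p2 p3 p5 p6 p7 \<beta>R2 by linarith
    qed
    define r where "r = min (norm x0 - R1) (R2 - norm x0)"
    have r0: "r > 0" unfolding r_def using d0 n1 n2 by auto
    have "ball x0 r \<subseteq> K"
    proof
      fix y assume "y \<in> ball x0 r"
      then have "dist x0 y < r" by simp
      moreover have "norm y \<le> norm x0 + dist x0 y" "norm x0 \<le> norm y + dist x0 y"
        by (metis dist_norm norm_minus_commute norm_triangle_sub add.commute)
           (metis dist_norm norm_triangle_sub)
      ultimately show "y \<in> K" unfolding K_def r_def by auto
    qed
    then have mn: "\<forall>y\<in>ball x0 r. v x0 - G ((norm x0)^2) \<le> v y - G ((norm y)^2)"
      using x0(2) unfolding \<phi>_def by auto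
    define s0 where "s0 = (norm x0)^2"
    have x0nz: "x0 \<noteq> 0" using d0 R1 by auto
    have s0g: "s0 \<ge> 9"
    proof -
      have "(3::real)^2 \<le> (norm x0)^2" using d0 R1 by (intro power_mono) auto
      then show ?thesis unfolding s0_def by simp
    qed
    have s0le: "s0 \<le> R2^2" unfolding s0_def using d0 R1 by (intro power_mono) auto
    have s\<sigma>: "s0 + \<sigma> > 0" using s0g \<sigma>0 by simp
    have neg: "G1 s0 \<le> 0"
    proof -
      have "a / (R2^2 + 1) \<le> a / (s0 + \<sigma>)" using a0 s\<sigma> s0le \<sigma>0 by (intro divide_left_mono) auto
      moreover have "(a/2) * inverse (s0 + \<sigma>) = (a / (s0 + \<sigma>)) / 2" by (simp add: inverse_eq_divide)
      ultimately show ?thesis unfolding G1_def \<beta>_def using neg_aux by blast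
    qed
    have rad: "2 * G1 s0 + 4 * G2 s0 * s0 \<ge> 0"
    proof -
      have "2 * G1 s0 + 4 * G2 s0 * s0 = \<beta> + a * (2 * s0 - (s0 + \<sigma>)) / (s0 + \<sigma>)^2"
        unfolding G1_def G2_def using s\<sigma> by (intro E1) simp
      then have "2 * G1 s0 + 4 * G2 s0 * s0 = \<beta> + a * (s0 - \<sigma>) / (s0 + \<sigma>)^2" by simp
      moreover have "a * (s0 - \<sigma>) / (s0 + \<sigma>)^2 \<ge> 0" using a0 s0g \<sigma>0 by simp
      ultimately show ?thesis using \<beta>0 by simp
    qed
    have key: "0 \<le> -2 * G1 s0 * (b x0 \<bullet> x0 + g x0 * norm x0) + c x0 * v x0
      - lam * (2 * G1 s0 + 4 * G2 s0 * s0) - 2 * (real CARD('n) - 1) * Lam * G1 s0"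
      using touch0[OF d1 d2 c2 x0nz _ _ r0 mn] neg rad unfolding s0_def by simp
    have gr: "-2 * G1 s0 * (b x0 \<bullet> x0 + g x0 * norm x0) \<le>
        -2 * G1 s0 * (c x0 * s0 * ln (norm x0) + lam - (real CARD('n) - 1) * Lam)"
      using growth[of x0] d0 R1 neg unfolding s0_def by (intro mult_left_mono) auto
    have four: "0 < lam * (4 * G1 s0 + 4 * G2 s0 * s0)"
    proof -
      have "4 * G1 s0 + 4 * G2 s0 * s0 = 2 * \<beta> - 2 * a * ((s0 + \<sigma>) - s0) / (s0 + \<sigma>)^2"
        unfolding G1_def G2_def using s\<sigma> by (intro E2) simp
      then have e4: "4 * G1 s0 + 4 * G2 s0 * s0 = 2 * \<beta> - 2 * a * \<sigma> / (s0 + \<sigma>)^2" by simp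
      have "(s0 + \<sigma>)^2 \<ge> 1" using s0g \<sigma>0 by (intro one_le_power) auto
      then have "a * \<sigma> / (s0 + \<sigma>)^2 \<le> a * \<sigma>" using a0 \<sigma>0 by (simp add: divide_le_eq mult_le_cancel_left)
      moreover have "a * \<sigma> < \<beta>"
      proof -
        have "a * \<sigma> = \<beta> / 2" unfolding \<beta>_def \<sigma>_def D_def by simp
        then show ?thesis using \<beta>0 by simp
      qed
      ultimately have "4 * G1 s0 + 4 * G2 s0 * s0 > 0" unfolding e4 by simp
      then show ?thesis using lam by simp
    qed
    have cterm: "c x0 * (v x0 - 2 * G1 s0 * s0 * ln (norm x0)) \<le> 0"
    proof (cases "c x0 = 0")
      case True then show ?thesis by simp
    next
      case False
      have M0: "M \<le> 0" using Mc[OF False] .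
      have r03: "norm x0 \<ge> 3" using d0 R1 by simp
      have l1: "ln (norm x0) \<ge> 1" using ln1[OF r03] .
      have l0: "ln (norm x0) \<ge> 0" using l1 by simp
      have "G s0 - 2 * G1 s0 * s0 * ln (norm x0) \<le> M"
      proof -
        have eq: "G s0 - 2 * G1 s0 * s0 * ln (norm x0) = M - (a/2) * ln (s0 + \<sigma>) + (a * s0 / (s0 + \<sigma>)) * ln (norm x0)
           + \<beta> * s0 * (1/2 - ln (norm x0))"
          unfolding G_def G1_def using s\<sigma> by (intro E3) simp
        have "a * s0 / (s0 + \<sigma>) \<le> a" using a0 s\<sigma> \<sigma>0 by (simp add: divide_le_eq)
        then have "(a * s0 / (s0 + \<sigma>)) * ln (norm x0) \<le> a * ln (norm x0)" using l0 by (intro mult_right_mono) auto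
        also have "a * ln (norm x0) = (a/2) * ln s0" unfolding s0_def by (simp add: ln_realpow)
        also have "\<dots> \<le> (a/2) * ln (s0 + \<sigma>)" using a0 s0g \<sigma>0 by (intro mult_left_mono ln_mono) auto
        finally have A1: "(a * s0 / (s0 + \<sigma>)) * ln (norm x0) \<le> (a/2) * ln (s0 + \<sigma>)" .
        have "\<beta> * s0 * (1/2 - ln (norm x0)) \<le> 0" using \<beta>0 s0g l1 by (intro mult_nonneg_nonpos) auto
        then show ?thesis using eq A1 by linarith
      qed
      moreover have "v x0 < G s0" using neg0 unfolding \<phi>_def s0_def by simp
      ultimately have "v x0 - 2 * G1 s0 * s0 * ln (norm x0) \<le> 0" using M0 by linarith
      then show ?thesis using c_nonneg[of x0] by (simp add: mult_nonneg_nonpos)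
    qed
    show False
      by (rule L_aux[OF key gr four cterm])
  qed
  then show ?thesis unfolding M_def by blast
qed

end

lemma loclip_cont:
  assumes "locally_lipschitz f"
  shows "continuous_on UNIV (f :: real^'n \<Rightarrow> 'b::metric_space)"
proof (rule continuous_at_imp_continuous_on, intro ballI)
  fix x :: "real^'n"
  obtain r L where r: "r > 0" "L-lipschitz_on (ball x r) f"
    using assms unfolding locally_lipschitz_def by blast
  have "continuous_on (ball x r) f" using r(2) by (rule lipschitz_on_continuous_on)
  then show "isCont f x" using r(1) by (simp add: continuous_on_eq_continuous_at)
qed

theorem corollary3p4:
  fixes F :: "real^'n \<Rightarrow> real \<Rightarrow> real^'n \<Rightarrow> real^'n^'n \<Rightarrow> real"
    and lam Lam R\<^sub>o :: real
    and b :: "real^'n \<Rightarrow> real^'n"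
    and g c :: "real^'n \<Rightarrow> real"
    and v :: "real^'n \<Rightarrow> real"
  assumes F_cont: "continuous_on {(x, t, p, X). symmetric_mat X} (\<lambda>(x, t, p, X). F x t p X)"
    and lam: "0 < lam" "lam \<le> Lam"
    and elliptic: "\<And>x t p X Q. symmetric_mat X \<Longrightarrow> symmetric_mat Q \<Longrightarrow> psd_mat Q \<Longrightarrow>
        lam * trace Q \<le> F x t p X - F x t p (X + Q) \<and> F x t p X - F x t p (X + Q) \<le> Lam * trace Q"
    and F_bound: "\<And>x t p. F x t p 0 \<le> - (b x \<bullet> p) + g x * norm p + c x * t"
    and b_lip: "locally_lipschitz b"
    and g_lip: "locally_lipschitz g"
    and c_cont: "continuous_on UNIV c"
    and g_nonneg: "\<And>x. g x \<ge> 0"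
    and c_nonneg: "\<And>x. c x \<ge> 0"
    and Ro: "R\<^sub>o > 0"
    and growth: "\<And>x. norm x \<ge> R\<^sub>o \<Longrightarrow>
        b x \<bullet> x + g x * norm x \<le> c x * (norm x)\<^sup>2 * ln (norm x) + lam - (real CARD('n) - 1) * Lam"
    and super: "viscosity_supersolution F v"
    and liminf: "\<forall>\<epsilon>>0. \<exists>R. \<forall>x. norm x \<ge> R \<longrightarrow> v x / ln (norm x) \<ge> - \<epsilon>"
    and alt: "(\<forall>x. c x = 0) \<or> (\<forall>x. v x \<le> 0)"
  shows "\<exists>k. \<forall>x. v x = k"
proof -
  interpret setting2 F lam Lam b g c v
    by (unfold_locales) (use lam elliptic F_bound g_nonneg super loclip_cont[OF b_lip]
          loclip_cont[OF g_lip] c_nonneg alt in auto)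
  obtain x1 where "\<forall>y. v x1 \<le> v y" using outer[OF Ro growth liminf] by blast
  then have "\<forall>x. v x = v x1" using strong_min by blast
  then show ?thesis by blast
qed

end
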